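(* Let $G=(V\cup\{O\},E)$ be a connected, unweighted, undirected graph, where $V$ is a set of $n$ terminals and $O\notin V$ is the depot, and let $k\in[1,n]$ be an integer tour capacity. Let $\mathrm{opt}$ denote the minimum cost of a feasible solution to the graphic CVRP on this instance, and let $\mathrm{rad}=\frac{2}{k}\sum_{v\in V}\mathrm{dist}(v)$. Then \[ \mathrm{opt}\geq \mathrm{rad}+\frac{n}{2}-\frac{n}{2k^2}. \]
   Context: For $v\in V$, $\mathrm{dist}(v)$ is the number of edges on a shortest $v$-to-$O$ path in $G$. A tour is a walk $z_1z_2\dots z_p$ in $G$ with $z_1=z_p=O$ and $(z_i,z_{i+1})\in E$ for all $i\in[1,p-1]$; its cost is $p-1$ (the number of edges traversed, with multiplicity). In the graphic CVRP, each terminal has unit demand; a feasible solution is a set of tours, each starting and ending at $O$, together with an assignment of each terminal to exactly one tour that visits it (the tour "covers" its demand), such that each tour covers at most $k$ terminals. The cost of a solution is the total cost of its tours, and the goal is to minimize this cost. *)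

theory Defs
  imports Complex_Main
begin

text \<open>Graph: vertex set V \<union> {O} (depot O written dep), undirected edges as a symmetric irreflexive relation E.\<close>

definition is_walk :: "('a \<times> 'a) set \<Rightarrow> 'a list \<Rightarrow> bool" where
  "is_walk E zs \<longleftrightarrow> zs \<noteq> [] \<and> (\<forall>i. Suc i < length zs \<longrightarrow> (zs ! i, zs ! Suc i) \<in> E)"

definition dist :: "('a \<times> 'a) set \<Rightarrow> 'a \<Rightarrow> 'a \<Rightarrow> nat" where
  "dist E dep v = (LEAST m. \<exists>zs. is_walk E zs \<and> hd zs = v \<and> last zs = dep \<and> length zs = Suc m)"

definition is_tour :: "('a \<times> 'a) set \<Rightarrow> 'a \<Rightarrow> 'a list \<Rightarrow> bool" where
  "is_tour E dep zs \<longleftrightarrow> is_walk E zs \<and> hd zs = dep \<and> last zs = dep"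

definition tour_cost :: "'a list \<Rightarrow> nat" where
  "tour_cost zs = length zs - 1"

definition feasible_solution ::
  "('a \<times> 'a) set \<Rightarrow> 'a \<Rightarrow> 'a set \<Rightarrow> nat \<Rightarrow> 'a list list \<Rightarrow> ('a \<Rightarrow> nat) \<Rightarrow> bool" where
  "feasible_solution E dep V k tours asg \<longleftrightarrow>
     (\<forall>t\<in>set tours. is_tour E dep t) \<and>
     (\<forall>v\<in>V. asg v < length tours \<and> v \<in> set (tours ! asg v)) \<and>
     (\<forall>i<length tours. card {v\<in>V. asg v = i} \<le> k)"

definition solution_cost :: "'a list list \<Rightarrow> nat" where
  "solution_cost tours = (\<Sum>t\<leftarrow>tours. tour_cost t)"

definition cvrp_opt :: "('a \<times> 'a) set \<Rightarrow> 'a \<Rightarrow> 'a set \<Rightarrow> nat \<Rightarrow> nat" where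
  "cvrp_opt E dep V k =
     (LEAST c. \<exists>tours asg. feasible_solution E dep V k tours asg \<and> solution_cost tours = c)"

definition connected_graph :: "'a set \<Rightarrow> ('a \<times> 'a) set \<Rightarrow> bool" where
  "connected_graph W E \<longleftrightarrow> (\<forall>u\<in>W. \<forall>w\<in>W. (u, w) \<in> E\<^sup>*)"

end

theory Submission
  imports Defs
begin

lemma walk_rev: assumes "sym E" "is_walk E zs" shows "is_walk E (rev zs)"
  unfolding is_walk_def
proof (intro conjI allI impI)
  show "rev zs \<noteq> []" using assms(2) by (simp add: is_walk_def)
next
  fix i assume i: "Suc i < length (rev zs)"
  let ?n = "length zs"
  have "(zs ! (?n - Suc (Suc i)), zs ! Suc (?n - Suc (Suc i))) \<in> E"
    using assms(2) i unfolding is_walk_def by auto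
  moreover have "Suc (?n - Suc (Suc i)) = ?n - Suc i" using i by simp
  ultimately have "(zs ! (?n - Suc (Suc i)), zs ! (?n - Suc i)) \<in> E" by simp
  then have "(zs ! (?n - Suc i), zs ! (?n - Suc (Suc i))) \<in> E"
    using assms(1) by (auto dest: symD)
  then show "(rev zs ! i, rev zs ! Suc i) \<in> E" using i by (simp add: rev_nth)
qed

lemma walk_drop: assumes "is_walk E zs" "i < length zs" shows "is_walk E (drop i zs)"
  using assms unfolding is_walk_def by auto

lemma walk_take: assumes "is_walk E zs" "0 < j" shows "is_walk E (take j zs)"
  using assms unfolding is_walk_def by auto

lemma walk_append: assumes "is_walk E xs" "is_walk E ys" "(last xs, hd ys) \<in> E"
  shows "is_walk E (xs @ ys)"
  unfolding is_walk_def
proof (intro conjI allI impI)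
  show "xs @ ys \<noteq> []" using assms by (simp add: is_walk_def)
next
  fix i assume i: "Suc i < length (xs @ ys)"
  consider "Suc i < length xs" | "Suc i = length xs" | "Suc i > length xs" by linarith
  then show "((xs @ ys) ! i, (xs @ ys) ! Suc i) \<in> E"
  proof cases
    case 1 then show ?thesis using assms(1) by (simp add: nth_append is_walk_def)
  next
    case 2
    have "xs \<noteq> []" "ys \<noteq> []" using assms by (auto simp: is_walk_def)
    then have "i = length xs - 1" using 2 by simp
    then show ?thesis using 2 assms(3) \<open>xs \<noteq> []\<close> \<open>ys \<noteq> []\<close> by (simp add: nth_append last_conv_nth hd_conv_nth)
  next
    case 3
    then have "Suc (i - length xs) < length ys" using i by simp
    then have "(ys ! (i - length xs), ys ! Suc (i - length xs)) \<in> E" using assms(2) by (simp add: is_walk_def)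
    moreover have "Suc i - length xs = Suc (i - length xs)" using 3 by simp
    ultimately show ?thesis using 3 by (simp add: nth_append)
  qed
qed

lemma walk_exists: assumes "(a, b) \<in> E\<^sup>*" shows "\<exists>zs. is_walk E zs \<and> hd zs = a \<and> last zs = b"
  using assms
proof (induction rule: rtrancl_induct)
  case base
  then show ?case by (intro exI[of _ "[a]"]) (simp add: is_walk_def)
next
  case (step y z)
  then obtain zs where zs: "is_walk E zs" "hd zs = a" "last zs = y" by blast
  have "is_walk E (zs @ [z])" using walk_append[OF zs(1), of "[z]"] zs step(2) by (simp add: is_walk_def)
  moreover have "zs \<noteq> []" using zs by (simp add: is_walk_def)
  ultimately show ?case using zs by (intro exI[of _ "zs @ [z]"]) simp
qed

lemma sq_bound: "finite (P::int set) \<Longrightarrow> int (card P)^2 \<le> 2 * (\<Sum>p\<in>P. \<bar>c - 2*p\<bar>) + 1"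
proof (induction "card P" arbitrary: P rule: less_induct)
  case less
  show ?case
  proof (cases "card P \<le> 1")
    case True
    then have "int (card P)^2 \<le> 1" by (cases "card P") auto
    moreover have "0 \<le> (\<Sum>p\<in>P. \<bar>c - 2*p\<bar>)" by (simp add: sum_nonneg)
    ultimately show ?thesis by linarith
  next
    case False
    then have ne: "P \<noteq> {}" by auto
    define a where "a = Min P"
    define b where "b = Max P"
    have a: "a \<in> P" using ne less.prems a_def by simp
    have b: "b \<in> P" using ne less.prems b_def by simp
    have sub: "P \<subseteq> {a..b}" using less.prems a_def b_def by auto
    have "card P \<le> card {a..b}" using card_mono[OF _ sub] by simp
    moreover have "a \<le> b" using sub a by auto
    ultimately have ba: "int (card P) \<le> b - a + 1" by simp
    have "a \<noteq> b" proof
      assume "a = b" then have "card P \<le> 1" using ba by simp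
      then show False using False by simp
    qed
    define P' where "P' = P - {a, b}"
    have cP': "card P' = card P - 2" using a b \<open>a \<noteq> b\<close> less.prems P'_def by (simp add: card_Diff_subset)
    have IH: "int (card P')^2 \<le> 2 * (\<Sum>p\<in>P'. \<bar>c - 2*p\<bar>) + 1"
      using less.hyps[of P'] cP' False less.prems P'_def by simp
    have split: "(\<Sum>p\<in>P. \<bar>c - 2*p\<bar>) = \<bar>c - 2*a\<bar> + \<bar>c - 2*b\<bar> + (\<Sum>p\<in>P'. \<bar>c - 2*p\<bar>)"
    proof -
      have 1: "(\<Sum>p\<in>P. \<bar>c - 2*p\<bar>) = \<bar>c - 2*a\<bar> + (\<Sum>p\<in>P-{a}. \<bar>c - 2*p\<bar>)"
        using sum.remove[OF less.prems a] .
      have 2: "(\<Sum>p\<in>P-{a}. \<bar>c - 2*p\<bar>) = \<bar>c - 2*b\<bar> + (\<Sum>p\<in>P-{a}-{b}. \<bar>c - 2*p\<bar>)"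
        using sum.remove[of "P-{a}" b] less.prems b \<open>a \<noteq> b\<close> by simp
      have "P-{a}-{b} = P'" using P'_def by auto
      then show ?thesis using 1 2 by simp
    qed
    have "\<bar>c - 2*a\<bar> + \<bar>c - 2*b\<bar> \<ge> 2 * (b - a)" by (smt (verit))
    moreover have "int (card P') = int (card P) - 2" using cP' False by simp
    ultimately have e: "int (card P) = int (card P') + 2" by simp
    have sq: "int (card P)^2 = int (card P')^2 + 4 * int (card P) - 4"
      unfolding e by (simp add: power2_eq_square algebra_simps)
    show ?thesis using IH split ba sq \<open>\<bar>c - 2*a\<bar> + \<bar>c - 2*b\<bar> \<ge> 2 * (b - a)\<close> by linarith
  qed
qed

lemma dist_le_walk: assumes "is_walk E zs" "hd zs = v" "last zs = dep"
  shows "dist E dep v \<le> length zs - 1"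
proof -
  have "zs \<noteq> []" using assms by (simp add: is_walk_def)
  then have "length zs = Suc (length zs - 1)" by simp
  then have "\<exists>zs'. is_walk E zs' \<and> hd zs' = v \<and> last zs' = dep \<and> length zs' = Suc (length zs - 1)"
    using assms by (intro exI[of _ zs]) simp
  then show ?thesis unfolding dist_def by (rule Least_le)
qed

lemma dist_pos: assumes "is_walk E zs" "hd zs = v" "last zs = dep" "v \<noteq> dep"
  shows "1 \<le> dist E dep v"
proof (rule ccontr)
  assume "\<not> 1 \<le> dist E dep v"
  then have d0: "dist E dep v = 0" by simp
  have "zs \<noteq> []" using assms by (simp add: is_walk_def)
  then have "length zs = Suc (length zs - 1)" by simp
  then have "\<exists>zs'. is_walk E zs' \<and> hd zs' = v \<and> last zs' = dep \<and> length zs' = Suc (length zs - 1)"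
    using assms by (intro exI[of _ zs]) simp
  then have "\<exists>ys. is_walk E ys \<and> hd ys = v \<and> last ys = dep \<and> length ys = Suc (dist E dep v)"
    unfolding dist_def by (rule LeastI)
  then obtain ys where ys: "hd ys = v" "last ys = dep" "length ys = 1" using d0 by auto
  then obtain y where "ys = [y]" by (cases ys) auto
  then show False using ys assms(4) by simp
qed

lemma tour_pos: assumes "sym E" "is_tour E dep t" "i < length t"
  shows "dist E dep (t!i) \<le> i" "dist E dep (t!i) \<le> length t - 1 - i"
    "t ! i \<noteq> dep \<Longrightarrow> 1 \<le> dist E dep (t!i)"
proof -
  have w: "is_walk E t" "hd t = dep" "last t = dep" using assms(2) by (auto simp: is_tour_def)
  have ws: "is_walk E (drop i t)" using walk_drop[OF w(1) assms(3)] .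
  have hs: "hd (drop i t) = t ! i" using assms(3) by (simp add: hd_drop_conv_nth)
  have tn: "t \<noteq> []" using assms(3) by auto
  have ls: "last (drop i t) = dep" using assms(3) w(3) tn by simp
  show "dist E dep (t!i) \<le> length t - 1 - i"
    using dist_le_walk[OF ws hs ls] by simp
  show "t ! i \<noteq> dep \<Longrightarrow> 1 \<le> dist E dep (t!i)" using dist_pos[OF ws hs ls] by simp
  have wp: "is_walk E (rev (take (Suc i) t))" using walk_rev[OF assms(1) walk_take[OF w(1)]] by simp
  have tne: "take (Suc i) t \<noteq> []" using tn by simp
  have "take (Suc i) t = take i t @ [t ! i]" using assms(3) by (rule take_Suc_conv_app_nth)
  then have hp: "hd (rev (take (Suc i) t)) = t ! i" by (simp only: hd_rev) simp
  have lp: "last (rev (take (Suc i) t)) = dep" using w(2) by (simp only: last_rev) simp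
  show "dist E dep (t!i) \<le> i" using dist_le_walk[OF wp hp lp] assms(3) by simp
qed

lemma arith_final:
  fixes D s c k :: real
  assumes "1 \<le> k" "1 \<le> s" "s \<le> k" "s + 1 \<le> c" "4 * D \<le> 2 * s * c - s^2 + 1"
  shows "(2 / k) * D + s / 2 - s / (2 * k^2) \<le> c"
proof -
  have k0: "k > 0" using assms by simp
  have a: "2 * k * (k - s) * (s + 1) \<le> 2 * k * (k - s) * c"
    using assms by (intro mult_left_mono) auto
  have ks: "0 \<le> k * s" using assms by simp
  have b: "0 \<le> (k - s) * (k * s + 2 * k - 1)"
    using assms ks by (intro mult_nonneg_nonneg; linarith)
  have c: "4 * k * D \<le> k * (2 * s * c - s^2 + 1)"
    using assms k0 by simp
  have "4 * k * D + k^2 * s - s \<le> 2 * k^2 * c"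
    using a b c by (simp add: power2_eq_square algebra_simps) 
  then have "(4 * k * D + k^2 * s - s) / (2 * k^2) \<le> c"
    using k0 by (simp add: divide_le_eq mult.commute)
  moreover have "(4 * k * D + k^2 * s - s) / (2 * k^2) = (2 / k) * D + s / 2 - s / (2 * k^2)"
    using k0 by (simp add: field_simps power2_eq_square)
  ultimately show ?thesis by simp
qed

lemma tour_bound:
  assumes symE: "sym E" and tour: "is_tour E dep t" and S: "S \<subseteq> set t" "dep \<notin> S" "card S \<le> k" "1 \<le> k"
  shows "(2 / real k) * (\<Sum>v\<in>S. real (dist E dep v)) + real (card S) / 2
          - real (card S) / (2 * real k ^ 2) \<le> real (tour_cost t)"
proof (cases "S = {}")
  case True
  then show ?thesis by simp
next
  case False
  define c where "c = length t - 1"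
  have fin: "finite S" using S(1) finite_subset by blast
  define f where "f v = (LEAST i. i < length t \<and> t ! i = v)" for v
  have f: "f v < length t \<and> t ! f v = v" if "v \<in> S" for v
  proof -
    have "v \<in> set t" using that S(1) by blast
    then have "\<exists>i. i < length t \<and> t ! i = v" by (simp add: in_set_conv_nth)
    then show ?thesis unfolding f_def by (rule LeastI_ex)
  qed
  have d1: "dist E dep v \<le> f v \<and> dist E dep v \<le> c - f v \<and> 1 \<le> dist E dep v" if "v \<in> S" for v
  proof -
    have "t ! f v \<noteq> dep" using f[OF that] that S(2) by auto
    then show ?thesis using tour_pos[OF symE tour, of "f v"] f[OF that] c_def by simp
  qed
  have inj: "inj_on f S" by (metis f inj_onI)
  define g where "g v = int (f v)" for v
  have injg: "inj_on g S" using inj unfolding g_def inj_on_def by simp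
  let ?s = "card S"
  have cardg: "card (g ` S) = ?s" using card_image[OF injg] .
  have pt: "2 * int (dist E dep v) \<le> int c - \<bar>int c - 2 * g v\<bar>" if "v \<in> S" for v
  proof -
    have a0: "f v < length t" using f[OF that] by simp
    have a: "f v \<le> c" using a0 unfolding c_def by arith
    have e: "int (c - f v) = int c - int (f v)" using a by simp
    have b: "int (dist E dep v) \<le> int c - g v" using d1[OF that] e unfolding g_def by linarith
    have c: "int (dist E dep v) \<le> g v" using d1[OF that] unfolding g_def by linarith
    show ?thesis using b c by (simp add: abs_if)
  qed
  have "(\<Sum>v\<in>S. 2 * int (dist E dep v)) \<le> (\<Sum>v\<in>S. int c - \<bar>int c - 2 * g v\<bar>)"
    using pt by (rule sum_mono)
  also have "\<dots> = int ?s * int c - (\<Sum>v\<in>S. \<bar>int c - 2 * g v\<bar>)"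
    by (simp add: sum_subtractf)
  also have "(\<Sum>v\<in>S. \<bar>int c - 2 * g v\<bar>) = (\<Sum>p\<in>g ` S. \<bar>int c - 2 * p\<bar>)"
    using sum.reindex[OF injg, of "\<lambda>p. \<bar>int c - 2 * p\<bar>"] by simp
  finally have k1: "2 * (\<Sum>v\<in>S. int (dist E dep v)) \<le> int ?s * int c - (\<Sum>p\<in>g ` S. \<bar>int c - 2 * p\<bar>)"
    by (simp add: sum_distrib_left)
  have k2: "int ?s ^ 2 \<le> 2 * (\<Sum>p\<in>g ` S. \<bar>int c - 2 * p\<bar>) + 1"
    using sq_bound[of "g ` S" "int c"] fin cardg by simp
  have key: "4 * (\<Sum>v\<in>S. int (dist E dep v)) \<le> 2 * int ?s * int c - int ?s ^ 2 + 1"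
    using k1 k2 by linarith
  have "g ` S \<subseteq> {1 .. int c - 1}"
  proof
    fix p assume "p \<in> g ` S"
    then obtain v where v: "v \<in> S" "p = g v" by auto
    show "p \<in> {1 .. int c - 1}" using d1[OF v(1)] v(2) unfolding g_def by auto
  qed
  then have "card (g ` S) \<le> card {1 .. int c - 1}" by (intro card_mono) auto
  then have h: "?s \<le> nat (int c - 1)" using cardg by simp
  have s1: "1 \<le> ?s" using False fin by (simp add: Suc_le_eq card_gt_0_iff)
  have "?s \<noteq> 0" using s1 by simp
  then have "0 < int c - 1" using h by (cases "0 < int c - 1") auto
  then have "int ?s \<le> int c - 1" using h by simp
  then have cs: "?s + 1 \<le> c" by linarith
  have keyr: "4 * (\<Sum>v\<in>S. real (dist E dep v)) \<le> 2 * real ?s * real c - real ?s ^ 2 + 1"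
  proof -
    have "real_of_int (4 * (\<Sum>v\<in>S. int (dist E dep v))) \<le> real_of_int (2 * int ?s * int c - int ?s ^ 2 + 1)"
      using key by (rule of_int_le_iff[THEN iffD2])
    then show ?thesis by simp
  qed
  have "1 \<le> ?s" using False fin by (simp add: Suc_le_eq card_gt_0_iff)
  then have r: "(2 / real k) * (\<Sum>v\<in>S. real (dist E dep v)) + real ?s / 2 - real ?s / (2 * real k ^ 2) \<le> real c"
    using arith_final[OF _ _ _ _ keyr] S cs by simp
  moreover have "tour_cost t = c" unfolding tour_cost_def c_def ..
  ultimately show ?thesis by simp
qed

lemma sol_bound:
  assumes symE: "sym E" and dV: "dep \<notin> V" and fin: "finite V" and k1: "1 \<le> k"
    and fs: "feasible_solution E dep V k tours asg"
  shows "(2 / real k) * (\<Sum>v\<in>V. real (dist E dep v)) + real (card V) / 2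
           - real (card V) / (2 * real k ^ 2) \<le> real (solution_cost tours)"
proof -
  let ?L = "length tours"
  define S where "S i = {v\<in>V. asg v = i}" for i
  define \<phi> where "\<phi> v = (2 / real k) * real (dist E dep v) + 1 / 2 - 1 / (2 * real k ^ 2)" for v
  have tb: "(\<Sum>v\<in>S i. \<phi> v) \<le> real (tour_cost (tours ! i))" if "i < ?L" for i
  proof -
    have t: "is_tour E dep (tours ! i)" using fs that unfolding feasible_solution_def by auto
    have s: "S i \<subseteq> set (tours ! i)" using fs unfolding feasible_solution_def S_def by auto
    have c: "card (S i) \<le> k" using fs that unfolding feasible_solution_def S_def by auto
    have d: "dep \<notin> S i" using dV unfolding S_def by auto
    have "(\<Sum>v\<in>S i. \<phi> v) = (2 / real k) * (\<Sum>v\<in>S i. real (dist E dep v)) + real (card (S i)) / 2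
           - real (card (S i)) / (2 * real k ^ 2)"
      unfolding \<phi>_def by (simp add: sum.distrib sum_subtractf sum_distrib_left)
    then show ?thesis using tour_bound[OF symE t s d c k1] by simp
  qed
  have "(\<Sum>i<?L. (\<Sum>v\<in>S i. \<phi> v)) = (\<Sum>v\<in>V. \<phi> v)"
    unfolding S_def using sum.group[OF fin, of "{..<?L}" asg \<phi>] fs
    unfolding feasible_solution_def by auto
  also have "(\<Sum>v\<in>V. \<phi> v) = (2 / real k) * (\<Sum>v\<in>V. real (dist E dep v)) + real (card V) / 2
           - real (card V) / (2 * real k ^ 2)"
    unfolding \<phi>_def by (simp add: sum.distrib sum_subtractf sum_distrib_left)
  finally have e: "(\<Sum>i<?L. (\<Sum>v\<in>S i. \<phi> v)) = (2 / real k) * (\<Sum>v\<in>V. real (dist E dep v)) + real (card V) / 2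
           - real (card V) / (2 * real k ^ 2)" .
  have "(\<Sum>i<?L. (\<Sum>v\<in>S i. \<phi> v)) \<le> (\<Sum>i<?L. real (tour_cost (tours ! i)))"
    using tb by (intro sum_mono) auto
  also have "\<dots> = real (solution_cost tours)"
    unfolding solution_cost_def by (simp add: sum_list_sum_nth atLeast0LessThan)
  finally show ?thesis using e by simp
qed

lemma tour_to: assumes symE: "sym E" and r: "(dep, v) \<in> E\<^sup>*" and vd: "v \<noteq> dep"
  shows "\<exists>t. is_tour E dep t \<and> v \<in> set t"
proof -
  obtain zs where zs: "is_walk E zs" "hd zs = dep" "last zs = v" using walk_exists[OF r] by blast
  have zne: "zs \<noteq> []" using zs by (simp add: is_walk_def)
  define rz where "rz = rev zs"
  have wr: "is_walk E rz" using walk_rev[OF symE zs(1)] rz_def by simp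
  have hr: "hd rz = v" "last rz = dep" using zs zne rz_def by (auto simp: hd_rev last_rev)
  have rne: "rz \<noteq> []" using zne rz_def by simp
  have len: "1 < length rz"
  proof (rule ccontr)
    assume "\<not> 1 < length rz"
    then have "length rz = 1" using rne by (cases rz) auto
    then obtain y where "rz = [y]" by (cases rz) (auto)
    then show False using hr vd by simp
  qed
  have wt: "is_walk E (drop 1 rz)" using walk_drop[OF wr len] .
  have e: "(rz ! 0, rz ! Suc 0) \<in> E" using wr len unfolding is_walk_def by auto
  have "last zs = rz ! 0" using rne hr zs(3) by (simp add: hd_conv_nth)
  moreover have "hd (drop 1 rz) = rz ! Suc 0" using len by (simp add: hd_drop_conv_nth)
  ultimately have "(last zs, hd (drop 1 rz)) \<in> E" using e by simp
  then have w: "is_walk E (zs @ drop 1 rz)" using walk_append[OF zs(1) wt] by simp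
  have dne: "drop 1 rz \<noteq> []" using len by simp
  have "last (zs @ drop 1 rz) = dep" using dne len hr by (simp add: last_drop)
  moreover have "hd (zs @ drop 1 rz) = dep" using zne zs by simp
  moreover have "v \<in> set (zs @ drop 1 rz)" using zs zne by auto
  ultimately show ?thesis using w unfolding is_tour_def by blast
qed

lemma feasible_exists:
  assumes symE: "sym E" and dV: "dep \<notin> V" and fin: "finite V" and k1: "1 \<le> k"
    and con: "connected_graph (V \<union> {dep}) E"
  shows "\<exists>tours asg. feasible_solution E dep V k tours asg"
proof -
  have ex: "\<exists>t. is_tour E dep t \<and> v \<in> set t" if "v \<in> V" for v
    using tour_to[OF symE _ ] con that dV unfolding connected_graph_def by auto
  define T where "T v = (SOME t. is_tour E dep t \<and> v \<in> set t)" for v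
  have T: "is_tour E dep (T v) \<and> v \<in> set (T v)" if "v \<in> V" for v
    unfolding T_def using ex[OF that] by (rule someI_ex)
  obtain xs where xs: "set xs = V" "distinct xs" using finite_distinct_list[OF fin] by blast
  define asg where "asg v = (SOME i. i < length xs \<and> xs ! i = v)" for v
  have asg: "asg v < length xs \<and> xs ! asg v = v" if "v \<in> V" for v
  proof -
    have "\<exists>i. i < length xs \<and> xs ! i = v" using that xs(1) by (metis in_set_conv_nth)
    then show ?thesis unfolding asg_def by (rule someI_ex)
  qed
  have "feasible_solution E dep V k (map T xs) asg"
    unfolding feasible_solution_def
  proof (intro conjI ballI allI impI)
    fix t assume "t \<in> set (map T xs)"
    then show "is_tour E dep t" using T xs(1) by auto
  next
    fix v assume v: "v \<in> V"
    show "asg v < length (map T xs)" using asg[OF v] by simp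
    show "v \<in> set (map T xs ! asg v)" using asg[OF v] T[OF v] by simp
  next
    fix i assume i: "i < length (map T xs)"
    have "{v \<in> V. asg v = i} \<subseteq> {xs ! i}" using asg by auto
    then have "card {v \<in> V. asg v = i} \<le> card {xs ! i}" by (intro card_mono) auto
    then show "card {v \<in> V. asg v = i} \<le> k" using k1 by simp
  qed
  then show ?thesis by blast
qed

theorem mainTheorem1:
  fixes V :: "'a set" and dep :: 'a and E :: "('a \<times> 'a) set" and k :: nat
  assumes "finite V"
    and "dep \<notin> V"
    and "E \<subseteq> (V \<union> {dep}) \<times> (V \<union> {dep})"
    and "sym E"
    and "irrefl E"
    and "connected_graph (V \<union> {dep}) E"
    and "1 \<le> k" and "k \<le> card V"
  shows "real (cvrp_opt E dep V k) \<ge>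
           (2 / real k) * (\<Sum>v\<in>V. real (dist E dep v)) + real (card V) / 2
           - real (card V) / (2 * real k ^ 2)"
proof -
  obtain tours asg where "feasible_solution E dep V k tours asg"
    using feasible_exists[OF assms(4,2,1,7,6)] by blast
  then have "\<exists>c. \<exists>tours asg. feasible_solution E dep V k tours asg \<and> solution_cost tours = c" by blast
  then have "\<exists>tours asg. feasible_solution E dep V k tours asg \<and> solution_cost tours = cvrp_opt E dep V k"
    unfolding cvrp_opt_def by (rule LeastI_ex)
  then obtain tours' asg' where f: "feasible_solution E dep V k tours' asg'"
    and c: "solution_cost tours' = cvrp_opt E dep V k" by blast
  show ?thesis using sol_bound[OF assms(4,2,1,7) f] c by simp
qed

end
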